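(* Let $n,k,l$ be nonnegative integers with $k+l\le n$, let $\alpha,\beta>-1$, set $\sigma=\alpha+\beta+1$, and for $h=k,\ldots,n-l$ and $i=k+l,\ldots,n$ define \[ z_{hi}=\binom{n}{h}\frac{(2i+\sigma)(k+l-n)_{i-k-l}(\alpha+2l+1)_{n-l-h}(\beta+2k+1)_{h-k}}{(\alpha+2l+1)_{i-k-l}\,(i+k+l+\sigma)_{n+1-k-l}},\qquad w_{hi}=Q_{i-k-l}(h-k;\,\beta+2k,\,\alpha+2l,\,n-k-l). \] Then for each fixed $i$ (and whenever the indices involved lie in the range $k\le h\le n-l$): \[ z_{ki}=\binom{n}{k}\frac{(2i+\sigma)(\alpha+l+i+1-k)_{n-i}(k+l-n)_{i-k-l}}{(i+k+l+\sigma)_{n-k-l+1}}, \] \[ z_{hi}=\frac{(n+1-h)(\beta+k+h)}{h(\alpha+l+n+1-h)}\,z_{h-1,i}\qquad(h=k+1,\ldots,n-l); \] and \[ w_{ki}=1,\qquad w_{k+1,i}=1+\frac{(i-k-l)(i+k+l+\sigma)}{(\beta+2k+1)(k+l-n)}, \] \[ w_{hi}=T_i(h)\,w_{h-1,i}+V(h)\,w_{h-2,i}\qquad(h=k+2,\ldots,n-l), \] where \[ V(h)=\frac{(h-k-1)(l+n+\alpha+2-h)}{(h+k+\beta)(h+l-n-1)},\qquad T_i(h)=1-V(h)-\frac{(k+l-i)(i+k+l+\sigma)}{(h+k+\beta)(h+l-n-1)}. \]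
   Context: Pochhammer symbol: $(a)_0=1$, $(a)_j=a(a+1)\cdots(a+j-1)$. Hahn polynomials: for a nonnegative integer $N$, $a,b>-1$ and $m=0,1,\ldots,N$, $Q_m(x;a,b,N)=\sum_{j=0}^m\frac{(-m)_j(m+a+b+1)_j(-x)_j}{j!\,(a+1)_j\,(-N)_j}$. (The products $d_{hi}=z_{hi}w_{hi}$ are the coefficients of the Bernstein polynomial $B^n_h(x)=\binom nh x^h(1-x)^{n-h}$ in the basis of modified Jacobi polynomials $J_{i,k,l}^{(\alpha,\beta)}(x)=(1-x)^lx^kR^{(\alpha+2l,\beta+2k)}_{i-k-l}(x)$, $i=k+l,\ldots,n$, with $R^{(a,b)}_m$ the shifted Jacobi polynomials.) *)

theory Defs
  imports Complex_Main
begin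

definition hahnQ :: "nat \<Rightarrow> real \<Rightarrow> real \<Rightarrow> real \<Rightarrow> nat \<Rightarrow> real" where
  "hahnQ m x a b N = (\<Sum>j=0..m. pochhammer (- real m) j * pochhammer (real m + a + b + 1) j
      * pochhammer (- x) j / (fact j * pochhammer (a + 1) j * pochhammer (- real N) j))"

definition zc :: "nat \<Rightarrow> nat \<Rightarrow> nat \<Rightarrow> real \<Rightarrow> real \<Rightarrow> nat \<Rightarrow> nat \<Rightarrow> real" where
  "zc n k l \<alpha> \<beta> h i = (let \<sigma> = \<alpha> + \<beta> + 1 in
     real (n choose h) * ((2 * real i + \<sigma>) * pochhammer (real k + real l - real n) (i - k - l)
       * pochhammer (\<alpha> + 2 * real l + 1) (n - l - h) * pochhammer (\<beta> + 2 * real k + 1) (h - k))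
     / (pochhammer (\<alpha> + 2 * real l + 1) (i - k - l)
        * pochhammer (real i + real k + real l + \<sigma>) (n + 1 - k - l)))"

definition wc :: "nat \<Rightarrow> nat \<Rightarrow> nat \<Rightarrow> real \<Rightarrow> real \<Rightarrow> nat \<Rightarrow> nat \<Rightarrow> real" where
  "wc n k l \<alpha> \<beta> h i = hahnQ (i - k - l) (real h - real k) (\<beta> + 2 * real k) (\<alpha> + 2 * real l) (n - k - l)"

end

theory Submission
  imports Defs
begin

lemma alg:
  fixes x a b N P R :: real and j :: nat
  assumes "x*R = (x - real j)*P"
  shows "(x+a+1)*(x-N)*((-(x+1))*P - (-x + real j)*P) - x*(x-b-N-1)*((-x + real j)*P - (-(x-1)+real j)*R)
   = (real j + 1)*(real j + 1 + a+b+1)*((-x + real j)*P) - (real j+1)*(real j-N)*(a+real j+1)*P"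
proof -
  have "x*(x-b-N-1)*((-(x-1)+real j)*R) = (x-b-N-1)*(-(x-1)+real j)*(x*R)" by (simp add: algebra_simps)
  also have "\<dots> = (x-b-N-1)*(-(x-1)+real j)*((x - real j)*P)" using assms by simp
  finally have e: "x*(x-b-N-1)*((-(x-1)+real j)*R) = (x-b-N-1)*(-(x-1)+real j)*((x - real j)*P)" .
  have "(x+a+1)*(x-N)*((-(x+1))*P - (-x + real j)*P) - x*(x-b-N-1)*((-x + real j)*P - (-(x-1)+real j)*R)
     = (x+a+1)*(x-N)*((-(x+1))*P - (-x + real j)*P) - x*(x-b-N-1)*((-x + real j)*P) + x*(x-b-N-1)*((-(x-1)+real j)*R)"
    by (simp add: algebra_simps)
  also have "\<dots> = (x+a+1)*(x-N)*((-(x+1))*P - (-x + real j)*P) - x*(x-b-N-1)*((-x + real j)*P) + (x-b-N-1)*(-(x-1)+real j)*((x - real j)*P)"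
    using e by simp
  also have "\<dots> = (real j + 1)*(real j + 1 + a+b+1)*((-x + real j)*P) - (real j+1)*(real j-N)*(a+real j+1)*P"
    by (simp add: algebra_simps)
  finally show ?thesis .
qed

lemma step:
  fixes x a b N :: real and j :: nat
  shows "(x+a+1)*(x-N)*(pochhammer (-(x+1)) (Suc j) - pochhammer (-x) (Suc j))
     - x*(x-b-N-1)*(pochhammer (-x) (Suc j) - pochhammer (-(x-1)) (Suc j))
   = (real j + 1)*(real j + 1 + a+b+1)*pochhammer (-x) (Suc j) - (real j+1)*(real j-N)*(a+real j+1)*pochhammer (-x) j"
proof -
  have f1: "pochhammer (-(x+1)) (Suc j) = (-(x+1))*pochhammer (-x) j"
    by (simp add: pochhammer_rec)
  have f2: "pochhammer (-x) (Suc j) = (-x + real j)*pochhammer (-x) j"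
    by (simp add: pochhammer_rec')
  have f3: "pochhammer (-(x-1)) (Suc j) = (-(x-1)+real j)*pochhammer (-(x-1)) j"
    by (simp add: pochhammer_rec')
  have f4: "pochhammer (-x) (Suc j) = (-x)*pochhammer (-(x-1)) j"
    by (simp add: pochhammer_rec)
  have "x*pochhammer (-(x-1)) j = (x - real j)*pochhammer (-x) j"
    using f2 f4 by (simp add: algebra_simps)
  from alg[OF this, of a N b]
  show ?thesis unfolding f1 f3 f2 .
qed


lemma hahn_diff:
  fixes x a b :: real and m N :: nat
  assumes a: "a > -1" and mN: "m \<le> N"
  shows "real m*(real m+a+b+1)*hahnQ m x a b N
     = (x+a+1)*(x-N)*(hahnQ m (x+1) a b N - hahnQ m x a b N)
       - x*(x-b-N-1)*(hahnQ m x a b N - hahnQ m (x-1) a b N)"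
proof -
  define A where "A j = pochhammer (- real m) j * pochhammer (real m + a + b + 1) j
      / (fact j * pochhammer (a + 1) j * pochhammer (- real N) j)" for j
  define p where "p y j = pochhammer (-y) j" for y :: real and j :: nat
  define lam where "lam = real m*(real m+a+b+1)"
  define L where "L j = (x+a+1)*(x-N)*(p (x+1) j - p x j) - x*(x-b-N-1)*(p x j - p (x-1) j)" for j
  define c where "c j = A j * (real j*(real j+a+b+1) - lam)" for j
  have hQ: "hahnQ m y a b N = (\<Sum>j=0..m. A j * p y j)" for y
    unfolding hahnQ_def A_def p_def by (rule sum.cong) auto
  have RHS: "(x+a+1)*(x-N)*(hahnQ m (x+1) a b N - hahnQ m x a b N)
       - x*(x-b-N-1)*(hahnQ m x a b N - hahnQ m (x-1) a b N) = (\<Sum>j=0..m. A j * L j)"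
    unfolding hQ L_def
    by (simp add: sum_subtractf[symmetric] sum_distrib_left algebra_simps)
  have ratio: "A (Suc j) * (real j + 1) * (real j - N) * (a + real j + 1)
      = A j * (real j - m) * (real m + a + b + 1 + real j)" if j: "j < m" for j
  proof -
    have n1: "fact j \<noteq> (0::real)" by simp
    have n2: "pochhammer (a+1) j \<noteq> 0" using a by (intro pochhammer_pos[THEN less_imp_neq, symmetric]) simp
    have n3: "pochhammer (- real N) j \<noteq> 0"
      using j mN by (auto simp: pochhammer_eq_0_iff)
    have n4: "a + 1 + real j \<noteq> 0" using a by simp
    have n5: "- real N + real j \<noteq> 0" using j mN by simp
    have n6: "real j + 1 \<noteq> 0" by simp
    have AS: "A (Suc j) = A j * (((- real m + real j) * (real m + a + b + 1 + real j))
        / ((real j + 1) * (a + 1 + real j) * (- real N + real j)))"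
      unfolding A_def pochhammer_rec'[of _ j] fact_Suc
      using n1 n2 n3 n4 n5 n6 by (simp add: field_simps)
    have e1: "(a + real j + 1) = (a + 1 + real j)" "real j - real N = - real N + real j" by simp_all
    show ?thesis unfolding AS e1 using n4 n5 n6 by (simp add: divide_simps)
  qed
  have L0: "L 0 = 0" by (simp add: L_def p_def)
  have Lsuc: "A (Suc j) * L (Suc j) = lam * (A (Suc j) * p x (Suc j)) + (c (Suc j) * p x (Suc j) - c j * p x j)"
    if j: "j < m" for j
  proof -
    have "L (Suc j) = (real j + 1)*(real j + 1 + a+b+1)*p x (Suc j) - (real j+1)*(real j-N)*(a+real j+1)*p x j"
      unfolding L_def p_def by (rule step)
    then have "A (Suc j) * L (Suc j) = A (Suc j) * ((real j + 1)*(real j + 1 + a+b+1)) * p x (Suc j)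
        - (A (Suc j) * (real j + 1) * (real j - N) * (a + real j + 1)) * p x j"
      by (simp only:) (simp add: algebra_simps)
    also have "\<dots> = A (Suc j) * ((real j + 1)*(real j + 1 + a+b+1)) * p x (Suc j)
        - (A j * (real j - m) * (real m + a + b + 1 + real j)) * p x j"
      using ratio[OF j] by simp
    finally show ?thesis unfolding c_def lam_def by (simp add: algebra_simps)
  qed
  have "(\<Sum>j=0..m. A j * L j) = lam * (\<Sum>j=0..m. A j * p x j)"
  proof (cases m)
    case 0
    then show ?thesis by (simp add: L0 lam_def)
  next
    case (Suc m')
    have s1: "(\<Sum>j=0..m. A j * L j) = (\<Sum>j<m. A (Suc j) * L (Suc j))"
      unfolding Suc atLeast0AtMost sum.atMost_Suc_shift by (simp add: L0 lessThan_Suc_atMost)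
    have s2: "(\<Sum>j=0..m. A j * p x j) = A 0 * p x 0 + (\<Sum>j<m. A (Suc j) * p x (Suc j))"
      unfolding Suc atLeast0AtMost sum.atMost_Suc_shift by (simp add: lessThan_Suc_atMost)
    have "(\<Sum>j<m. A (Suc j) * L (Suc j)) = (\<Sum>j<m. lam * (A (Suc j) * p x (Suc j)) + (c (Suc j) * p x (Suc j) - c j * p x j))"
      by (rule sum.cong) (auto simp: Lsuc)
    also have "\<dots> = lam * (\<Sum>j<m. A (Suc j) * p x (Suc j)) + (c m * p x m - c 0 * p x 0)"
      by (simp add: sum.distrib sum_distrib_left sum_lessThan_telescope[where f = "\<lambda>j. c j * p x j"])
    also have "c m = 0" by (simp add: c_def lam_def)
    also have "c 0 * p x 0 = - lam" by (simp add: c_def A_def p_def)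
    finally have s3: "(\<Sum>j<m. A (Suc j) * L (Suc j)) = lam * (\<Sum>j<m. A (Suc j) * p x (Suc j)) + lam" by simp
    have "A 0 * p x 0 = 1" by (simp add: A_def p_def)
    then show ?thesis using s1 s2 s3 by (simp add: algebra_simps)
  qed
  then show ?thesis using RHS hQ lam_def by simp
qed


lemma solve3:
  fixes B D lam Q0 Q1 Qm :: real
  assumes "B \<noteq> 0" "lam*Q0 = B*(Q1-Q0) - D*(Q0-Qm)"
  shows "Q1 = (1 - (-D/B) - (-lam)/B)*Q0 + (-D/B)*Qm"
  using assms by (simp add: field_simps)

lemma wrec:
  fixes n k l i h :: nat and \<alpha> \<beta> :: real
  assumes "k + l \<le> n" "\<alpha> > -1" "\<beta> > -1" "k + l \<le> i" "i \<le> n" "k + 2 \<le> h" "h \<le> n - l"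
  shows "wc n k l \<alpha> \<beta> h i =
     (1 - (real h - real k - 1) * (real l + real n + \<alpha> + 2 - real h)
                  / ((real h + real k + \<beta>) * (real h + real l - real n - 1))
        - (real k + real l - real i) * (real i + real k + real l + (\<alpha> + \<beta> + 1))
                  / ((real h + real k + \<beta>) * (real h + real l - real n - 1))) * wc n k l \<alpha> \<beta> (h - 1) i
     + (real h - real k - 1) * (real l + real n + \<alpha> + 2 - real h)
                  / ((real h + real k + \<beta>) * (real h + real l - real n - 1)) * wc n k l \<alpha> \<beta> (h - 2) i"
proof -
  define x where "x = real h - real k - 1"
  define m where "m = i - k - l"
  define NN where "NN = n - k - l"
  have rN: "real NN = real n - real k - real l" using assms unfolding NN_def by simp
  have rm: "real m = real i - real k - real l" using assms unfolding m_def by simp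
  have e1: "real h - real k = x + 1" "real (h-1) - real k = x" "real (h-2) - real k = x - 1"
    using assms unfolding x_def by (simp_all add: of_nat_diff)
  have aa: "\<beta> + 2 * real k > -1" using assms by simp
  have mN: "m \<le> NN" using assms unfolding m_def NN_def by simp
  have Bnz: "(x + (\<beta> + 2 * real k) + 1) * (x - real NN) \<noteq> 0"
    using assms unfolding x_def rN by auto
  note S = solve3[OF Bnz hahn_diff[OF aa mN, where x=x and b="\<alpha> + 2 * real l"]]
  have eB: "(x + (\<beta> + 2 * real k) + 1) * (x - real NN) = (real h + real k + \<beta>) * (real h + real l - real n - 1)"
    unfolding x_def rN by (simp add: algebra_simps)
  have eD: "- (x * (x - (\<alpha> + 2 * real l) - real NN - 1)) = (real h - real k - 1) * (real l + real n + \<alpha> + 2 - real h)"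
    unfolding x_def rN by (simp add: algebra_simps)
  have eL: "- (real m * (real m + (\<beta> + 2 * real k) + (\<alpha> + 2 * real l) + 1)) = (real k + real l - real i) * (real i + real k + real l + (\<alpha> + \<beta> + 1))"
    unfolding rm by (simp add: algebra_simps)
  show ?thesis
    using S assms unfolding wc_def e1 m_def[symmetric] NN_def[symmetric] eB eD eL minus_divide_left[symmetric]
    by simp
qed


lemma hahn0: "hahnQ m 0 a b N = 1"
proof -
  have "hahnQ m 0 a b N = (\<Sum>j=0..m. if j = 0 then 1 else 0)"
    unfolding hahnQ_def by (rule sum.cong) (auto simp: pochhammer_0_left)
  then show ?thesis by simp
qed

lemma sum_two: fixes f :: "nat \<Rightarrow> real"
  assumes "\<And>j. j \<ge> 2 \<Longrightarrow> f j = 0"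
  shows "(\<Sum>j=0..m. f j) = f 0 + (if m \<ge> 1 then f 1 else 0)"
proof (induction m)
  case 0 then show ?case by simp
next
  case (Suc m) then show ?case using assms by (cases m) auto
qed

lemma hahn1:
  assumes "a > -1" "m \<le> N"
  shows "hahnQ m 1 a b N = 1 + real m * (real m + a + b + 1) / ((a + 1) * (- real N))"
proof -
  have z: "pochhammer (-1::real) j = 0" if "j \<ge> 2" for j
    using that by (auto simp: pochhammer_eq_0_iff intro!: exI[of _ 1])
  have "hahnQ m 1 a b N = 1 + (if m \<ge> 1 then pochhammer (- real m) 1 * pochhammer (real m + a + b + 1) 1
      * pochhammer (- 1) 1 / (fact 1 * pochhammer (a + 1) 1 * pochhammer (- real N) 1) else 0)"
    unfolding hahnQ_def by (subst sum_two) (auto simp: z)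
  also have "\<dots> = 1 + real m * (real m + a + b + 1) / ((a + 1) * (- real N))"
    by (cases "m \<ge> 1") auto
  finally show ?thesis .
qed

lemma zrat:
  fixes H C bh bg M E X P PA PB Q Den :: real
  assumes "H \<noteq> 0" "C \<noteq> 0" "bh * H = bg * M"
  shows "bh * (X*P*PA*(PB*E)) / (Q*Den) = M*E/(H*C) * (bg*(X*P*(PA*C)*PB)/(Q*Den))"
proof (cases "Q*Den = 0")
  case True then show ?thesis by simp
next
  case False
  have "bh = bg * M / H" using assms by (simp add: field_simps)
  then show ?thesis using assms False by (simp add: field_simps)
qed

lemma zk:
  fixes b Y P Pq R D :: real
  assumes "Pq \<noteq> 0"
  shows "b*(Y*P*(Pq*R)*1)/(Pq*D) = b*(Y*R*P)/D"
proof (cases "D = 0")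
  case True then show ?thesis by simp
next
  case False then show ?thesis using assms by (simp add: field_simps)
qed

theorem theorem4:
  fixes n k l i :: nat and \<alpha> \<beta> :: real
  assumes "k + l \<le> n" and "\<alpha> > -1" and "\<beta> > -1"
    and "k + l \<le> i" and "i \<le> n"
  defines "\<sigma> \<equiv> \<alpha> + \<beta> + 1"
  defines "V \<equiv> (\<lambda>h::nat. (real h - real k - 1) * (real l + real n + \<alpha> + 2 - real h)
                  / ((real h + real k + \<beta>) * (real h + real l - real n - 1)))"
  defines "T \<equiv> (\<lambda>h::nat. 1 - V h - (real k + real l - real i) * (real i + real k + real l + \<sigma>)
                  / ((real h + real k + \<beta>) * (real h + real l - real n - 1)))"
  shows "zc n k l \<alpha> \<beta> k i = real (n choose k) * ((2 * real i + \<sigma>)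
            * pochhammer (\<alpha> + real l + real i + 1 - real k) (n - i)
            * pochhammer (real k + real l - real n) (i - k - l))
          / pochhammer (real i + real k + real l + \<sigma>) (n - k - l + 1)
    \<and> (\<forall>h. k + 1 \<le> h \<and> h \<le> n - l \<longrightarrow>
          zc n k l \<alpha> \<beta> h i = (real n + 1 - real h) * (\<beta> + real k + real h)
            / (real h * (\<alpha> + real l + real n + 1 - real h)) * zc n k l \<alpha> \<beta> (h - 1) i)
    \<and> wc n k l \<alpha> \<beta> k i = 1
    \<and> (k + 1 \<le> n - l \<longrightarrow> wc n k l \<alpha> \<beta> (k + 1) i =
          1 + (real i - real k - real l) * (real i + real k + real l + \<sigma>)
            / ((\<beta> + 2 * real k + 1) * (real k + real l - real n)))
    \<and> (\<forall>h. k + 2 \<le> h \<and> h \<le> n - l \<longrightarrow>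
          wc n k l \<alpha> \<beta> h i = T h * wc n k l \<alpha> \<beta> (h - 1) i + V h * wc n k l \<alpha> \<beta> (h - 2) i)"
proof (intro conjI allI impI)
  show "wc n k l \<alpha> \<beta> k i = 1" unfolding wc_def by (simp add: hahn0)
next
  assume "k + 1 \<le> n - l"
  have "wc n k l \<alpha> \<beta> (k + 1) i = hahnQ (i - k - l) 1 (\<beta> + 2 * real k) (\<alpha> + 2 * real l) (n - k - l)"
    unfolding wc_def by simp
  also have "\<dots> = 1 + real (i-k-l) * (real (i-k-l) + (\<beta> + 2 * real k) + (\<alpha> + 2 * real l) + 1)
        / ((\<beta> + 2 * real k + 1) * (- real (n-k-l)))"
    using assms by (subst hahn1) auto
  also have "\<dots> = 1 + (real i - real k - real l) * (real i + real k + real l + \<sigma>)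
            / ((\<beta> + 2 * real k + 1) * (real k + real l - real n))"
    using assms unfolding \<sigma>_def by (simp add: of_nat_diff algebra_simps)
  finally show "wc n k l \<alpha> \<beta> (k + 1) i =
          1 + (real i - real k - real l) * (real i + real k + real l + \<sigma>)
            / ((\<beta> + 2 * real k + 1) * (real k + real l - real n))" .
next
  fix h assume "k + 2 \<le> h \<and> h \<le> n - l"
  then show "wc n k l \<alpha> \<beta> h i = T h * wc n k l \<alpha> \<beta> (h - 1) i + V h * wc n k l \<alpha> \<beta> (h - 2) i"
    using wrec[of k l n \<alpha> \<beta> i h] assms unfolding T_def V_def \<sigma>_def by simp
next
  have split: "n - l - k = (i - k - l) + (n - i)" using assms by simp
  have shift: "\<alpha> + 2 * real l + 1 + real (i - k - l) = \<alpha> + real l + real i + 1 - real k"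
    using assms by (simp add: of_nat_diff)
  have pp: "pochhammer (\<alpha> + 2 * real l + 1) (n - l - k) =
     pochhammer (\<alpha> + 2 * real l + 1) (i - k - l) * pochhammer (\<alpha> + real l + real i + 1 - real k) (n - i)"
    unfolding split pochhammer_product' shift ..
  have nz: "pochhammer (\<alpha> + 2 * real l + 1) (i - k - l) \<noteq> 0"
    using assms by (intro pochhammer_pos[THEN less_imp_neq, symmetric]) simp
  have e: "n + 1 - k - l = n - k - l + 1" using assms by simp
  show "zc n k l \<alpha> \<beta> k i = real (n choose k) * ((2 * real i + \<sigma>)
            * pochhammer (\<alpha> + real l + real i + 1 - real k) (n - i)
            * pochhammer (real k + real l - real n) (i - k - l))
          / pochhammer (real i + real k + real l + \<sigma>) (n - k - l + 1)"
    unfolding zc_def Let_def \<sigma>_def[symmetric] pp e diff_self_eq_0 pochhammer_0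
    by (rule zk[OF nz])
next
  fix h assume h: "k + 1 \<le> h \<and> h \<le> n - l"
  define g where "g = h - 1"
  have hg: "h = Suc g" using h unfolding g_def by simp
  have b1: "h * (n choose h) = (n - g) * (n choose g)"
    unfolding hg using binomial_absorption[of g n] binomial_absorb_comp[of n g] by simp
  have b2: "real (n choose h) * real h = real (n choose g) * (real n + 1 - real h)"
  proof -
    have "real (h * (n choose h)) = real ((n - g) * (n choose g))" using b1 by simp
    then show ?thesis using h unfolding hg by (simp add: of_nat_diff algebra_simps)
  qed
  have s1: "n - l - g = Suc (n - l - h)" using h unfolding hg by linarith
  have s2: "h - k = Suc (g - k)" using h unfolding hg by linarith
  have hl: "l + h \<le> n" using h by linarith
  have r1: "real (n - l - h) = real n - real l - real h" using hl by (simp add: of_nat_diff)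
  have r2: "real (g - k) = real h - 1 - real k" using h unfolding hg by (simp add: of_nat_diff)
  have pa: "pochhammer (\<alpha> + 2 * real l + 1) (n - l - g) = pochhammer (\<alpha> + 2 * real l + 1) (n - l - h) * (\<alpha> + real l + real n + 1 - real h)"
    unfolding s1 pochhammer_rec' r1 by (simp add: algebra_simps)
  have pb: "pochhammer (\<beta> + 2 * real k + 1) (h - k) = pochhammer (\<beta> + 2 * real k + 1) (g - k) * (\<beta> + real k + real h)"
    unfolding s2 pochhammer_rec' r2 by (simp add: algebra_simps)
  have hz: "real h \<noteq> 0" using h by simp
  have "real l + real h \<le> real n" using hl by linarith
  then have cz: "\<alpha> + real l + real n + 1 - real h \<noteq> 0" using assms(2) by linarith
  show "zc n k l \<alpha> \<beta> h i = (real n + 1 - real h) * (\<beta> + real k + real h)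
            / (real h * (\<alpha> + real l + real n + 1 - real h)) * zc n k l \<alpha> \<beta> (h - 1) i"
    unfolding zc_def Let_def g_def[symmetric] pa pb
    by (rule zrat[OF hz cz b2])
qed

end
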